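(* For any real continuous function $f\in C(\Omega)$, $[\mathcal D,\pi(M_f)]=0$ if and only if $f-f\circ\sigma=0$. The latter implies that $f$ is constant.
   Context: $\Omega=\{0,1\}^{\mathbb N}$ with the shift $\sigma$; for $a\in\{0,1\}$, $ax=(a,x_1,\dots)$. $\mu$ is the measure of maximal entropy (uniform Bernoulli product measure), $L^2(\mu)$ the Hilbert space of square-integrable functions. Ruelle operator $L\phi(x)=\frac12(\phi(0x)+\phi(1x))$; Koopman operator $K\phi=\phi\circ\sigma$. For $f\in C(\Omega)$, $M_f$ is multiplication $g\mapsto fg$ on $L^2(\mu)$. On $\mathcal H=L^2(\mu)\times L^2(\mu)$, $\mathcal D=\begin{pmatrix}0&K\\ L&0\end{pmatrix}$ and $\pi(A)=\begin{pmatrix}A&0\\0&A\end{pmatrix}$; $[\mathcal D,\pi(A)]=\mathcal D\pi(A)-\pi(A)\mathcal D$. *)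

theory Defs
  imports "HOL-Probability.Probability"
begin

text \<open>The one-sided full shift on two symbols: \<Omega> = {0,1}^\<nat>, encoded as nat \<Rightarrow> bool
  (False = 0, True = 1), with the product of discrete topologies.\<close>

type_synonym omega = "nat \<Rightarrow> bool"

definition Omega_top :: "omega topology" where
  "Omega_top = product_topology (\<lambda>_. discrete_topology (UNIV :: bool set)) UNIV"

definition shift :: "omega \<Rightarrow> omega" where
  "shift x = (\<lambda>n. x (Suc n))"

definition pre :: "bool \<Rightarrow> omega \<Rightarrow> omega" where
  "pre a x = (\<lambda>n. case n of 0 \<Rightarrow> a | Suc m \<Rightarrow> x m)"

text \<open>measure of maximal entropy: uniform Bernoulli product measure\<close>
definition mu :: "omega measure" where
  "mu = PiM UNIV (\<lambda>_. measure_pmf (bernoulli_pmf (1/2)))"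

text \<open>L^2(mu): square integrable (measurable) representatives; operators act on
  representatives, and operator identities are understood mu-a.e.\<close>
definition L2 :: "(omega \<Rightarrow> real) set" where
  "L2 = {g. g \<in> borel_measurable mu \<and> integrable mu (\<lambda>x. (g x)\<^sup>2)}"

definition Ruelle :: "(omega \<Rightarrow> real) \<Rightarrow> (omega \<Rightarrow> real)" where
  "Ruelle \<phi> = (\<lambda>x. (\<phi> (pre False x) + \<phi> (pre True x)) / 2)"

definition Koopman :: "(omega \<Rightarrow> real) \<Rightarrow> (omega \<Rightarrow> real)" where
  "Koopman \<phi> = \<phi> \<circ> shift"

definition Mult :: "(omega \<Rightarrow> real) \<Rightarrow> (omega \<Rightarrow> real) \<Rightarrow> (omega \<Rightarrow> real)" where
  "Mult f g = (\<lambda>x. f x * g x)"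

text \<open>On H = L^2 \<times> L^2: D = [[0,K],[L,0]], \<pi>(A) = diag(A,A)\<close>
definition Dirac :: "(omega \<Rightarrow> real) \<times> (omega \<Rightarrow> real) \<Rightarrow> (omega \<Rightarrow> real) \<times> (omega \<Rightarrow> real)" where
  "Dirac v = (Koopman (snd v), Ruelle (fst v))"

definition rep :: "((omega \<Rightarrow> real) \<Rightarrow> (omega \<Rightarrow> real))
    \<Rightarrow> (omega \<Rightarrow> real) \<times> (omega \<Rightarrow> real) \<Rightarrow> (omega \<Rightarrow> real) \<times> (omega \<Rightarrow> real)" where
  "rep A v = (A (fst v), A (snd v))"

definition commutator :: "((omega \<Rightarrow> real) \<Rightarrow> (omega \<Rightarrow> real))
    \<Rightarrow> (omega \<Rightarrow> real) \<times> (omega \<Rightarrow> real) \<Rightarrow> (omega \<Rightarrow> real) \<times> (omega \<Rightarrow> real)" where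
  "commutator A v = (let a = Dirac (rep A v); b = rep A (Dirac v)
                     in (\<lambda>x. fst a x - fst b x, \<lambda>x. snd a x - snd b x))"

definition op_zero_H :: "((omega \<Rightarrow> real) \<times> (omega \<Rightarrow> real) \<Rightarrow> (omega \<Rightarrow> real) \<times> (omega \<Rightarrow> real)) \<Rightarrow> bool" where
  "op_zero_H T \<longleftrightarrow> (\<forall>g1\<in>L2. \<forall>g2\<in>L2.
      (AE x in mu. fst (T (g1, g2)) x = 0) \<and> (AE x in mu. snd (T (g1, g2)) x = 0))"

end

theory Submission
  imports Defs
begin

lemma shift_pre[simp]: "shift (pre a x) = x"
  by (rule ext) (simp add: shift_def pre_def)

lemma funpow_shift: "(shift ^^ n) w i = w (i + n)"
  by (induction n arbitrary: i) (auto simp: shift_def)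

lemma inv_iter:
  fixes f :: "omega \<Rightarrow> real"
  assumes S: "\<forall>x. f x - f (shift x) = 0"
  shows "f ((shift ^^ n) w) = f w"
proof (induction n)
  case 0
  then show ?case by simp
next
  case (Suc n)
  have "f (shift ((shift ^^ n) w)) = f ((shift ^^ n) w)"
    using S[rule_format, of "(shift ^^ n) w"] by simp
  then show ?case using Suc by simp
qed

lemma tri: "\<bar>a - b\<bar> < \<bar>b - c\<bar>/2 \<Longrightarrow> \<bar>d - c\<bar> < \<bar>b - c\<bar>/2 \<Longrightarrow> d - a \<noteq> (0::real)"
  by (auto simp: abs_if split: if_splits)

lemma topspace_Omega[simp]: "topspace Omega_top = UNIV"
  by (simp add: Omega_top_def topspace_product_topology)

lemma open_cyl:
  assumes "openin Omega_top U" "x \<in> U"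
  shows "\<exists>n. \<forall>z. (\<forall>i<n. z i = x i) \<longrightarrow> z \<in> U"
proof -
  from assms obtain V where V: "finite {i. V i \<noteq> UNIV}" "x \<in> Pi\<^sub>E UNIV V" "Pi\<^sub>E UNIV V \<subseteq> U"
    unfolding Omega_top_def openin_product_topology_alt by auto
  obtain n where n: "\<forall>i\<in>{i. V i \<noteq> UNIV}. i < n"
    using V(1) finite_nat_bounded by (metis lessThan_iff subsetD)
  show ?thesis
  proof (intro exI allI impI)
    fix z assume z: "\<forall>i<n. z i = x i"
    have "z \<in> Pi\<^sub>E UNIV V"
    proof -
      have "z i \<in> V i" for i
        using n z V(2) by (cases "V i = UNIV") auto
      then show ?thesis by auto
    qed
    then show "z \<in> U" using V(3) by auto
  qed
qed

lemma cont_cyl: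
  assumes "continuous_map Omega_top euclideanreal f" "e > 0"
  shows "\<exists>n. \<forall>z. (\<forall>i<n. z i = x i) \<longrightarrow> \<bar>f z - f x\<bar> < e"
proof -
  have "openin Omega_top {z \<in> topspace Omega_top. f z \<in> ball (f x) e}"
    using assms(1) unfolding continuous_map_def by auto
  then have "openin Omega_top {z. f z \<in> ball (f x) e}" by simp
  from open_cyl[OF this] assms(2) show ?thesis
    by (auto simp: dist_real_def abs_minus_commute)
qed

definition bM :: "nat \<Rightarrow> bool measure" where
  "bM = (\<lambda>_. measure_pmf (bernoulli_pmf (1/2)))"

lemma mu_bM: "mu = PiM UNIV bM" by (simp add: mu_def bM_def)

lemma prob_mu: "prob_space mu"
  unfolding mu_def by (rule prob_space_PiM) (simp add: prob_space_measure_pmf)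

lemma cyl_pos:
  fixes x :: omega and n :: nat
  defines "C \<equiv> prod_emb UNIV bM {..<n} (Pi\<^sub>E {..<n} (\<lambda>i. {x i}))"
  shows "C \<in> sets mu" "emeasure mu C > 0" "\<And>z. z \<in> C \<Longrightarrow> \<forall>i<n. z i = x i"
proof -
  show "C \<in> sets mu" unfolding C_def mu_bM
    by (intro sets_PiM_I) (auto simp: bM_def)
  have "emeasure mu C = (\<Prod>i\<in>{..<n}. emeasure (bM i) {x i})"
    unfolding C_def mu_bM
    by (rule emeasure_PiM_emb) (auto simp: bM_def prob_space_measure_pmf)
  also have "\<dots> = (\<Prod>i\<in>{..<n}. ennreal (1/2))"
    by (intro prod.cong refl) (auto simp: bM_def emeasure_pmf_single)
  also have "\<dots> = ennreal (\<Prod>i<(n::nat). 1 / 2)"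
    by (rule prod_ennreal) simp
  also have "\<dots> > 0" by (simp del: power_one_over)
  finally show "emeasure mu C > 0" .
  fix z assume "z \<in> C" then show "\<forall>i<n. z i = x i"
    unfolding C_def by (auto simp: prod_emb_def PiE_iff)
qed

lemma const_L2: "(\<lambda>_. c) \<in> L2"
proof -
  interpret prob_space mu by (rule prob_mu)
  show ?thesis unfolding L2_def by auto
qed

theorem lemma2p12:
  fixes f :: "omega \<Rightarrow> real"
  assumes "continuous_map Omega_top euclideanreal f"
  shows "(op_zero_H (commutator (Mult f)) \<longleftrightarrow> (\<forall>x. f x - f (shift x) = 0))
       \<and> ((\<forall>x. f x - f (shift x) = 0) \<longrightarrow> (\<exists>c. \<forall>x. f x = c))"
proof (intro conjI impI iffI)
  assume H: "op_zero_H (commutator (Mult f))"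
  then have "AE x in mu. fst (commutator (Mult f) (\<lambda>_. 1, \<lambda>_. 1)) x = 0"
    using const_L2[of 1] unfolding op_zero_H_def by blast
  then have AE: "AE x in mu. f (shift x) - f x = 0"
    unfolding commutator_def Dirac_def rep_def Koopman_def Mult_def
    by (simp add: Let_def)
  show "\<forall>x. f x - f (shift x) = 0"
  proof (rule ccontr)
    assume "\<not> (\<forall>x. f x - f (shift x) = 0)"
    then obtain x where x: "f x \<noteq> f (shift x)" by auto
    define e where "e = \<bar>f x - f (shift x)\<bar> / 2"
    have e: "e > 0" using x by (simp add: e_def)
    obtain n1 where n1: "\<And>z. (\<forall>i<n1. z i = x i) \<Longrightarrow> \<bar>f z - f x\<bar> < e"
      using cont_cyl[OF assms e, of x] by auto
    obtain n2 where n2: "\<And>z. (\<forall>i<n2. z i = shift x i) \<Longrightarrow> \<bar>f z - f (shift x)\<bar> < e"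
      using cont_cyl[OF assms e, of "shift x"] by auto
    define n where "n = max n1 (Suc n2)"
    define C where "C = prod_emb UNIV bM {..<n} (Pi\<^sub>E {..<n} (\<lambda>i. {x i}))"
    have bad: "f (shift z) - f z \<noteq> 0" if "z \<in> C" for z
    proof -
      have z: "\<forall>i<n. z i = x i" using cyl_pos(3)[of z n x] that unfolding C_def by simp
      have "\<bar>f z - f x\<bar> < e" using z by (intro n1) (auto simp: n_def)
      moreover have "\<bar>f (shift z) - f (shift x)\<bar> < e"
        using z by (intro n2) (auto simp: n_def shift_def)
      ultimately show ?thesis unfolding e_def by (rule tri)
    qed
    have "AE z in mu. z \<notin> C"
      using AE by eventually_elim (use bad in auto)
    then have "emeasure mu C = 0"
      using cyl_pos(1)[of n x] unfolding C_def
      by (subst (asm) AE_iff_measurable[of C]) (auto simp: C_def dest: sets.sets_into_space)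
    then show False using cyl_pos(2)[of n x] unfolding C_def by simp
  qed
next
  assume S: "\<forall>x. f x - f (shift x) = 0"
  then have S': "f (pre a x) = f x" for a x
    by (metis eq_iff_diff_eq_0 shift_pre)
  show "op_zero_H (commutator (Mult f))"
    unfolding op_zero_H_def commutator_def Dirac_def rep_def Koopman_def Mult_def Ruelle_def
    using S by (auto simp: Let_def S' field_simps)
next
  assume S: "\<forall>x. f x - f (shift x) = 0"
  have eq: "f x = f y" for x y
  proof (rule ccontr)
    assume ne: "f x \<noteq> f y"
    define e where "e = \<bar>f x - f y\<bar>"
    have e: "e > 0" using ne by (simp add: e_def)
    obtain n where n: "\<And>z. (\<forall>i<n. z i = x i) \<Longrightarrow> \<bar>f z - f x\<bar> < e"
      using cont_cyl[OF assms e, of x] by auto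
    define w where "w = (\<lambda>i. if i < n then x i else y (i - n))"
    have "(shift ^^ n) w = y"
      by (rule ext) (simp add: w_def funpow_shift)
    then have "f w = f y" using inv_iter[OF S, of n w] by simp
    moreover have "\<bar>f w - f x\<bar> < e" by (intro n) (simp add: w_def)
    ultimately show False unfolding e_def by simp
  qed
  then show "\<exists>c. \<forall>x. f x = c" by blast
qed

end
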